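(* Let $A,B\subset\mathbb D$ be bounded domains and assume there is $R>0$ such that $A\cap B_R(1)=B\cap B_R(1)=\mathbb D\cap B_R(1)$, where $B_R(z_0):=\{z\in\mathbb C:|z-z_0|<R\}$. Let $T\colon A\to B$ be a conformal map of $A$ onto $B$ with $T(1)=1$ (in the sense of its boundary extension). Then $c:=T'(1)>0$, and for every $\delta>0$ there exists $\varepsilon>0$ such that $$|z|^{c+\delta}\le|T(z)|\le|z|^{c-\delta}\qquad\text{for all }z\in A\cap B_\varepsilon(1).$$
   Context: $\mathbb D$ is the open unit disk; $T'(1)$ refers to the derivative of the analytic extension of $T$ to a neighborhood of $1$ obtained by Schwarz reflection across the unit circle. *)

theory Defs
  imports "HOL-Analysis.Analysis"
begin

end

theory Submission
  imports Defs "HOL-Complex_Analysis.Complex_Analysis"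
begin

lemma cauchy_linepath_holo:
  assumes h: "continuous_on (closed_segment p q) h" and S: "open S" "S \<inter> closed_segment p q = {}"
  shows "(\<lambda>w. contour_integral (linepath p q) (\<lambda>u. h u / (u - w))) holomorphic_on S"
proof -
  have int: "((\<lambda>u. h u / (u - w)^1) has_contour_integral contour_integral (linepath p q) (\<lambda>u. h u / (u - w))) (linepath p q)"
    if "w \<in> S - path_image (linepath p q)" for w
  proof -
    have "w \<notin> closed_segment p q" using that S by auto
    then have "continuous_on (closed_segment p q) (\<lambda>u. h u / (u - w))"
      by (intro continuous_intros h) auto
    then show ?thesis
      by (simp add: has_contour_integral_integral contour_integrable_continuous_linepath)
  qed
  show ?thesis
    unfolding holomorphic_on_def
  proof
    fix w assume "w \<in> S"
    then have w: "w \<in> S - path_image (linepath p q)" using S by auto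
    have "\<exists>D. ((\<lambda>w. contour_integral (linepath p q) (\<lambda>u. h u / (u - w))) has_field_derivative D) (at w)"
      by (rule exI, rule Cauchy_next_derivative(2)[where f'=h and k=1 and B="norm (q-p)" and S=S, OF _ _ int])
         (use h S w in auto)
    then show "(\<lambda>w. contour_integral (linepath p q) (\<lambda>u. h u / (u - w))) field_differentiable at w within S"
      using field_differentiable_at_within field_differentiable_def by metis
  qed
qed

lemma rect_split:
  assumes "continuous_on (path_image (rectpath a1 a3)) f"
  shows "contour_integral (rectpath a1 a3) f =
     contour_integral (linepath a1 (Complex (Re a3) (Im a1))) f
   + contour_integral (linepath (Complex (Re a3) (Im a1)) a3) f
   + contour_integral (linepath a3 (Complex (Re a1) (Im a3))) f
   + contour_integral (linepath (Complex (Re a1) (Im a3)) a1) f"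
proof -
  define a2 a4 where "a2 = Complex (Re a3) (Im a1)" and "a4 = Complex (Re a1) (Im a3)"
  have pi: "path_image (rectpath a1 a3) = closed_segment a1 a2 \<union> closed_segment a2 a3 \<union> closed_segment a3 a4 \<union> closed_segment a4 a1"
    by (simp add: rectpath_def Let_def path_image_join a2_def a4_def Un_assoc)
  have c1: "f contour_integrable_on linepath a1 a2" and c2: "f contour_integrable_on linepath a2 a3"
   and c3: "f contour_integrable_on linepath a3 a4" and c4: "f contour_integrable_on linepath a4 a1"
    using assms unfolding pi
    by (auto intro!: contour_integrable_continuous_linepath elim: continuous_on_subset)
  have "contour_integral (rectpath a1 a3) f = contour_integral (linepath a1 a2 +++ linepath a2 a3 +++ linepath a3 a4 +++ linepath a4 a1) f"
    by (simp add: rectpath_def Let_def a2_def a4_def)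
  also have "\<dots> = contour_integral (linepath a1 a2) f + (contour_integral (linepath a2 a3) f + (contour_integral (linepath a3 a4) f + contour_integral (linepath a4 a1) f))"
    using c1 c2 c3 c4 by (simp add: contour_integrable_joinI valid_path_join)
  finally show ?thesis by (simp add: a2_def a4_def add.assoc)
qed

lemma pair_pointwise:
  fixes z u w :: complex
  assumes "Im u = t" "0 < t" "2*t \<le> Im w" "norm z \<le> M" "\<bar>Im z\<bar> \<le> \<epsilon>"
  shows "norm (z/(u-w) - cnj z/(cnj u - w)) \<le> 8*M*t/(Im w)^2 + 4*\<epsilon>/Im w"
proof -
  define d where "d = Im w"
  have d: "d > 0" using assms d_def by auto
  have n1: "norm (u - w) \<ge> d/2"
    using abs_Im_le_cmod[of "u-w"] assms by (simp add: d_def)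
  have n2: "norm (cnj u - w) \<ge> d/2"
    using abs_Im_le_cmod[of "cnj u-w"] assms by (simp add: d_def)
  have nz1: "u - w \<noteq> 0" using n1 d by auto
  have nz2: "cnj u - w \<noteq> 0" using n2 d by auto
  have M: "0 \<le> M" using assms(4) norm_ge_zero[of z] by linarith
  have eps: "0 \<le> \<epsilon>" using assms(5) by linarith
  have eq: "z/(u-w) - cnj z/(cnj u - w) = of_real (Re z) * ((cnj u - u) / ((u-w)*(cnj u - w)))
            + \<i> * of_real (Im z) * (1/(u-w) + 1/(cnj u - w))"
  proof -
    have zz: "z = of_real (Re z) + \<i> * of_real (Im z)" "cnj z = of_real (Re z) - \<i> * of_real (Im z)"
      by (simp_all add: complex_eq_iff)
    have gen: "(of_real x + \<i> * of_real y)/A - (of_real x - \<i> * of_real y)/B = of_real x * ((B - A)/(A*B)) + \<i> * of_real y *(1/A+1/B)"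
      if "A \<noteq> 0" "B \<noteq> 0" for x y A B
      using that by (simp add: field_simps)
    have "(of_real x + \<i> * of_real y)/(u-w) - (of_real x - \<i> * of_real y)/(cnj u - w) = of_real x * ((cnj u - u)/((u-w)*(cnj u - w))) + \<i> * of_real y *(1/(u-w)+1/(cnj u - w))" for x y
      using gen[OF nz1 nz2, of x y] by simp
    from this[of "Re z" "Im z"] show ?thesis by (simp only: zz[symmetric])
  qed
  have cu: "norm (cnj u - u) = 2*t"
  proof -
    have "cnj u - u = - (2 * \<i> * of_real t)" using assms(1) by (simp add: complex_eq_iff)
    then show ?thesis using assms(2) by (simp add: norm_mult)
  qed
  have t1: "norm (of_real (Re z) * ((cnj u - u) / ((u-w)*(cnj u - w)))) \<le> M * (2*t) / ((d/2)*(d/2))"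
  proof -
    have "norm (of_real (Re z) * ((cnj u - u) / ((u-w)*(cnj u - w)))) = \<bar>Re z\<bar> * (2*t) / (norm (u-w) * norm (cnj u - w))"
      by (simp add: norm_mult norm_divide cu)
    also have "\<dots> \<le> M * (2*t) / (norm (u-w) * norm (cnj u - w))"
      using abs_Re_le_cmod[of z] assms(2,4) nz1 nz2
      by (intro divide_right_mono mult_right_mono) auto
    also have "\<dots> \<le> M * (2*t) / ((d/2)*(d/2))"
      using n1 n2 d M assms(2) by (intro divide_left_mono mult_mono mult_pos_pos) auto
    finally show ?thesis .
  qed
  have t2: "norm (\<i> * of_real (Im z) * (1/(u-w) + 1/(cnj u - w))) \<le> \<epsilon> * (2/d + 2/d)"
  proof -
    have a: "norm (1/(u-w)) \<le> 2/d" using n1 d by (simp add: norm_divide divide_simps)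
    have b: "norm (1/(cnj u-w)) \<le> 2/d" using n2 d by (simp add: norm_divide divide_simps)
    have "norm (\<i> * of_real (Im z) * (1/(u-w) + 1/(cnj u - w))) = \<bar>Im z\<bar> * norm (1/(u-w) + 1/(cnj u - w))"
      by (simp add: norm_mult)
    also have "\<dots> \<le> \<epsilon> * (2/d + 2/d)"
      using assms(5) norm_triangle_le[OF add_mono[OF a b]] eps by (intro mult_mono) auto
    finally show ?thesis .
  qed
  have "norm (z/(u-w) - cnj z/(cnj u - w)) \<le> M * (2*t) / ((d/2)*(d/2)) + \<epsilon> * (2/d + 2/d)"
    unfolding eq using norm_triangle_le[OF add_mono[OF t1 t2]] by simp
  also have "\<dots> = 8*M*t/(Im w)^2 + 4*\<epsilon>/Im w"
    using d by (simp add: d_def field_simps power2_eq_square)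
  finally show ?thesis .
qed

lemma pair_bound:
  fixes F :: "complex \<Rightarrow> complex"
  assumes c: "0 < c" and t: "0 < t" "2*t \<le> Im w"
    and contF: "continuous_on (closed_segment (Complex (-c) t) (Complex c t)) F"
    and bnd: "\<And>u. u \<in> closed_segment (Complex (-c) t) (Complex c t) \<Longrightarrow> norm (F u) \<le> M \<and> \<bar>Im (F u)\<bar> \<le> \<epsilon>"
  shows "norm (contour_integral (linepath (Complex (-c) t) (Complex c t)) (\<lambda>u. F u/(u-w))
          + contour_integral (linepath (Complex c (-t)) (Complex (-c) (-t))) (\<lambda>u. cnj (F (cnj u))/(u-w)))
         \<le> (8*M*t/(Im w)^2 + 4*\<epsilon>/Im w) * (2*c)"
proof -
  define L where "L = linepath (Complex (-c) t) (Complex c t)"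
  define L' where "L' = linepath (Complex (-c) (-t)) (Complex c (-t))"
  have segL: "closed_segment (Complex (-c) t) (Complex c t) = {u. Im u = t \<and> Re u \<in> closed_segment (-c) c}"
    by (simp add: closed_segment_same_Im)
  have segL': "closed_segment (Complex (-c) (-t)) (Complex c (-t)) = {u. Im u = -t \<and> Re u \<in> closed_segment (-c) c}"
    by (simp add: closed_segment_same_Im)
  have cnjseg: "cnj ` closed_segment (Complex (-c) (-t)) (Complex c (-t)) \<subseteq> closed_segment (Complex (-c) t) (Complex c t)"
    unfolding segL segL' by auto
  have ne1: "u - w \<noteq> 0" if "Im u = t" for u using that t by auto
  have ne2: "cnj u - w \<noteq> 0" if "Im u = t" for u using that t by (auto simp: complex_eq_iff)
  have ne3: "u - w \<noteq> 0" if "Im u = -t" for u using that t by auto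
  have cont1: "continuous_on (closed_segment (Complex (-c) t) (Complex c t)) (\<lambda>u. F u/(u-w))"
    using ne1 by (intro continuous_intros contF) (auto simp: segL)
  have cont2: "continuous_on (closed_segment (Complex (-c) t) (Complex c t)) (\<lambda>u. cnj (F u)/(cnj u-w))"
    using ne2 by (intro continuous_intros contF) (auto simp: segL)
  have contFc: "continuous_on (closed_segment (Complex (-c) (-t)) (Complex c (-t))) (\<lambda>u. F (cnj u))"
    by (rule continuous_on_compose2[OF contF continuous_on_cnj[OF continuous_on_id] cnjseg])
  have cont3: "continuous_on (closed_segment (Complex (-c) (-t)) (Complex c (-t))) (\<lambda>u. cnj (F (cnj u))/(u-w))"
    using ne3 by (intro continuous_intros contFc continuous_on_id) (auto simp: segL')
  have rev: "contour_integral (linepath (Complex c (-t)) (Complex (-c) (-t))) (\<lambda>u. cnj (F (cnj u))/(u-w))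
      = - contour_integral L' (\<lambda>u. cnj (F (cnj u))/(u-w))"
    using contour_integral_reverse_linepath[OF cont3] by (simp add: L'_def)
  have lx: "L' x = cnj (L x)" for x
    by (simp add: L_def L'_def linepath_def complex_eq_iff)
  have "contour_integral L' (\<lambda>u. cnj (F (cnj u))/(u-w)) = contour_integral L (\<lambda>u. cnj (F u)/(cnj u-w))"
  proof -
    have d: "Complex c (- t) - Complex (- c) (- t) = Complex c t - Complex (- c) t"
      by (simp add: complex_eq_iff)
    show ?thesis
      by (simp add: contour_integral_integral L_def L'_def lx[unfolded L_def L'_def] d)
  qed
  then have eq: "contour_integral L (\<lambda>u. F u/(u-w)) + contour_integral (linepath (Complex c (-t)) (Complex (-c) (-t))) (\<lambda>u. cnj (F (cnj u))/(u-w))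
     = contour_integral L (\<lambda>u. F u/(u-w) - cnj (F u)/(cnj u-w))"
    using rev cont1 cont2
    by (simp add: L_def contour_integral_diff contour_integrable_continuous_linepath)
  have "norm (contour_integral L (\<lambda>u. F u/(u-w) - cnj (F u)/(cnj u-w))) \<le> (8*M*t/(Im w)^2 + 4*\<epsilon>/Im w) * norm (Complex c t - Complex (-c) t)"
    unfolding L_def
  proof (rule contour_integral_bound_linepath)
    show "(\<lambda>u. F u / (u - w) - cnj (F u) / (cnj u - w)) contour_integrable_on linepath (Complex (- c) t) (Complex c t)"
      using cont1 cont2 by (intro contour_integrable_continuous_linepath continuous_on_diff)
    obtain u0 where u0: "u0 \<in> closed_segment (Complex (-c) t) (Complex c t)" by auto
    have M: "0 \<le> M" using bnd[OF u0] norm_ge_zero[of "F u0"] by linarith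
    have e: "0 \<le> \<epsilon>" using bnd[OF u0] by linarith
    show "0 \<le> 8 * M * t / (Im w)\<^sup>2 + 4 * \<epsilon> / Im w"
      using M e t by (intro add_nonneg_nonneg divide_nonneg_pos) auto
    show "norm (F u / (u - w) - cnj (F u) / (cnj u - w)) \<le> 8 * M * t / (Im w)\<^sup>2 + 4 * \<epsilon> / Im w"
      if "u \<in> closed_segment (Complex (- c) t) (Complex c t)" for u
      using pair_pointwise[of u t w "F u" M \<epsilon>] bnd[OF that] that t by (auto simp: segL)
  qed
  moreover have "norm (Complex c t - Complex (-c) t) = 2*c" proof -
    have "Complex c t - Complex (-c) t = of_real (2*c)" by (simp add: complex_eq_iff)
    then show ?thesis using c by simp
  qed
  ultimately show ?thesis using eq by (simp add: L_def)
qed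

lemma seg_holo_helper:
  assumes "continuous_on T f" "closed_segment p q \<subseteq> T" "\<And>u. u \<in> closed_segment p q \<Longrightarrow> \<rho> \<le> norm u"
  shows "(\<lambda>w. contour_integral (linepath p q) (\<lambda>u. f u/(u-w))) holomorphic_on ball 0 \<rho>"
proof (rule cauchy_linepath_holo)
  show "continuous_on (closed_segment p q) f" using assms(1,2) by (rule continuous_on_subset)
  show "ball 0 \<rho> \<inter> closed_segment p q = {}" using assms(3) by force
qed auto

lemma seg_small:
  assumes "continuous_on (closed_segment p q) f" "\<And>u. u \<in> closed_segment p q \<Longrightarrow> norm (f u) \<le> M \<and> \<delta> \<le> norm (u - w)" "0 < \<delta>"
  shows "norm (contour_integral (linepath p q) (\<lambda>u. f u/(u-w))) \<le> M/\<delta> * norm (q - p)"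
proof (rule contour_integral_bound_linepath)
  have ne: "u - w \<noteq> 0" if "u \<in> closed_segment p q" for u using assms(2)[OF that] assms(3) by auto
  show "(\<lambda>u. f u / (u - w)) contour_integrable_on linepath p q"
    using ne by (intro contour_integrable_continuous_linepath continuous_intros assms(1)) auto
  have M: "0 \<le> M" using assms(2)[of p] norm_ge_zero[of "f p"] by (meson ends_in_segment(1) order_trans)
  then show "0 \<le> M / \<delta>" using assms(3) by simp
  show "norm (f u / (u - w)) \<le> M / \<delta>" if "u \<in> closed_segment p q" for u
    using assms(2)[OF that] assms(3) M ne[OF that]
    by (simp add: norm_divide divide_simps) (metis mult.commute mult_mono norm_ge_zero)
qed

lemma vseg: "closed_segment (Complex x y1) (Complex x y2) = {u. Re u = x \<and> Im u \<in> closed_segment y1 y2}"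
  by (simp add: closed_segment_same_Re)
lemma hseg: "closed_segment (Complex x1 y) (Complex x2 y) = {u. Im u = y \<and> Re u \<in> closed_segment x1 x2}"
  by (simp add: closed_segment_same_Im)

lemma normv: "norm (Complex x y1 - Complex x y2) = \<bar>y1 - y2\<bar>"
proof -
  have "Complex x y1 - Complex x y2 = \<i> * of_real (y1 - y2)" by (simp add: complex_eq_iff)
  then show ?thesis by (metis norm_ii norm_mult norm_of_real mult_1)
qed

lemma lin6:
  fixes x1 x2 x3 x4 y1 y2 y3 y4 A B C :: complex
  assumes "x1+x2+x3+x4 = A" "y1+y2+y3+y4 = 0" "B = x2+x3+x4+y1+y2+y4" "C*(Fw - Hw) = A - B"
  shows "C*(Fw-Hw) = x1 + y3"
proof -
  have y3: "y3 = -(y1+y2+y4)" using assms(2) by (simp add: eq_neg_iff_add_eq_0 algebra_simps)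
  have "A - B = (x1+x2+x3+x4) - (x2+x3+x4+y1+y2+y4)" by (simp add: assms(1)[symmetric] assms(3))
  also have "\<dots> = x1 - (y1+y2+y4)" by (simp add: algebra_simps)
  also have "\<dots> = x1 + y3" by (simp add: y3)
  finally show ?thesis using assms(4) by simp
qed

lemma reflection_box:
  fixes F :: "complex \<Rightarrow> complex" and a b M :: real
  assumes a: "0 < a" and b: "0 < b"
    and holF: "F holomorphic_on box (Complex (-a) 0) (Complex a b)"
    and bnd: "\<And>w. w \<in> box (Complex (-a) 0) (Complex a b) \<Longrightarrow> norm (F w) \<le> M"
    and lim: "\<And>\<epsilon>. \<epsilon> > 0 \<Longrightarrow> \<exists>\<tau>>0. \<forall>w\<in>box (Complex (-a) 0) (Complex a b). Im w < \<tau> \<longrightarrow> \<bar>Im (F w)\<bar> \<le> \<epsilon>"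
  obtains r H where "0 < r" "H holomorphic_on ball 0 r" "\<And>w. w \<in> ball 0 r \<Longrightarrow> 0 < Im w \<Longrightarrow> H w = F w"
proof -
  define P where "P = box (Complex (-a) 0) (Complex a b)"
  define Q where "Q = box (Complex (-a) (-b)) (Complex a 0)"
  define g where "g = (\<lambda>z. cnj (F (cnj z)))"
  define a1 where "a1 = a/2"
  define b1 where "b1 = b/2"
  define \<rho> where "\<rho> = min a1 b1"
  define r where "r = \<rho>/2"
  have a1: "0 < a1" "a1 < a" using a by (auto simp: a1_def)
  have b1: "0 < b1" "b1 < b" using b by (auto simp: b1_def)
  have \<rho>: "0 < \<rho>" "\<rho> \<le> a1" "\<rho> \<le> b1" using a1 b1 by (auto simp: \<rho>_def)
  have r: "0 < r" "r < \<rho>" "r \<le> a1/2" using \<rho> by (auto simp: r_def)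
  have inP: "w \<in> P \<longleftrightarrow> -a < Re w \<and> Re w < a \<and> 0 < Im w \<and> Im w < b" for w
    by (auto simp: P_def in_box_complex_iff)
  have inQ: "w \<in> Q \<longleftrightarrow> -a < Re w \<and> Re w < a \<and> -b < Im w \<and> Im w < 0" for w
    by (auto simp: Q_def in_box_complex_iff)
  have openP: "open P" and convP: "convex P" by (simp_all add: P_def open_box convex_box)
  have openQ: "open Q" and convQ: "convex Q" by (simp_all add: Q_def open_box convex_box)
  have holF': "F holomorphic_on P" using holF by (simp add: P_def)
  have contF: "continuous_on P F" using holF' holomorphic_on_imp_continuous_on by blast
  have bndP: "\<And>u. u \<in> P \<Longrightarrow> norm (F u) \<le> M" using bnd by (simp add: P_def)
  have cQ: "cnj ` Q = P"
    by (auto simp: image_cnj_conv_vimage_cnj inP inQ)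
  have holg: "g holomorphic_on Q"
  proof -
    have "cnj \<circ> F \<circ> cnj holomorphic_on Q"
      by (rule holomorphic_on_compose_cnj_cnj) (use holF' cQ openQ in auto)
    then show ?thesis by (simp add: g_def o_def)
  qed
  have contg: "continuous_on Q g" using holg holomorphic_on_imp_continuous_on by blast
  have bndQ: "\<And>u. u \<in> Q \<Longrightarrow> norm (g u) \<le> M"
    using bndP by (auto simp: g_def inP inQ)
  have M: "0 \<le> M"
  proof -
    have "norm (F (Complex 0 b1)) \<le> M" using bndP[of "Complex 0 b1"] a b1 by (auto simp: inP)
    then show ?thesis by (meson norm_ge_zero order_trans)
  qed
  define I where "I = (\<lambda>p q f w. contour_integral (linepath p q) (\<lambda>u. f u / (u - w)))"
  define H where "H = (\<lambda>t w. (I (Complex a1 t) (Complex a1 b1) F w + I (Complex a1 b1) (Complex (-a1) b1) F w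
      + I (Complex (-a1) b1) (Complex (-a1) t) F w + I (Complex (-a1) (-b1)) (Complex a1 (-b1)) g w
      + I (Complex a1 (-b1)) (Complex a1 (-t)) g w + I (Complex (-a1) (-t)) (Complex (-a1) (-b1)) g w) / (2*pi*\<i>))"
  have holH: "H t holomorphic_on ball 0 \<rho>" if t: "0 < t" "t \<le> b1" for t
  proof -
    have nr: "\<rho> \<le> norm u" if "Re u = a1 \<or> Re u = -a1 \<or> Im u = b1 \<or> Im u = -b1" for u
      using that abs_Re_le_cmod[of u] abs_Im_le_cmod[of u] \<rho> a1 b1 by auto
    have 1: "I (Complex a1 t) (Complex a1 b1) F holomorphic_on ball 0 \<rho>"
      unfolding I_def using t a1 b1
      by (intro seg_holo_helper[OF contF]) (auto simp: vseg inP closed_segment_eq_real_ivl intro!: nr)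
    have 2: "I (Complex a1 b1) (Complex (-a1) b1) F holomorphic_on ball 0 \<rho>"
      unfolding I_def using t a1 b1
      by (intro seg_holo_helper[OF contF]) (auto simp: hseg inP closed_segment_eq_real_ivl intro!: nr)
    have 3: "I (Complex (-a1) b1) (Complex (-a1) t) F holomorphic_on ball 0 \<rho>"
      unfolding I_def using t a1 b1
      by (intro seg_holo_helper[OF contF]) (auto simp: vseg inP closed_segment_eq_real_ivl intro!: nr)
    have 4: "I (Complex (-a1) (-b1)) (Complex a1 (-b1)) g holomorphic_on ball 0 \<rho>"
      unfolding I_def using t a1 b1
      by (intro seg_holo_helper[OF contg]) (auto simp: hseg inQ closed_segment_eq_real_ivl intro!: nr)
    have 5: "I (Complex a1 (-b1)) (Complex a1 (-t)) g holomorphic_on ball 0 \<rho>"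
      unfolding I_def using t a1 b1
      by (intro seg_holo_helper[OF contg]) (auto simp: vseg inQ closed_segment_eq_real_ivl intro!: nr)
    have 6: "I (Complex (-a1) (-t)) (Complex (-a1) (-b1)) g holomorphic_on ball 0 \<rho>"
      unfolding I_def using t a1 b1
      by (intro seg_holo_helper[OF contg]) (auto simp: vseg inQ closed_segment_eq_real_ivl intro!: nr)
    show ?thesis unfolding H_def
      by (intro holomorphic_intros 1 2 3 4 5 6) auto
  qed
  have ident: "2*pi*\<i> * (F w - H t w) = I (Complex (-a1) t) (Complex a1 t) F w + I (Complex a1 (-t)) (Complex (-a1) (-t)) g w"
    if t: "0 < t" "t < Im w" "Im w < b1" "\<bar>Re w\<bar> < a1" for t w
  proof -
    define \<gamma> where "\<gamma> = rectpath (Complex (-a1) t) (Complex a1 b1)"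
    define \<gamma>' where "\<gamma>' = rectpath (Complex (-a1) (-b1)) (Complex a1 (-t))"
    have wbox: "w \<in> box (Complex (-a1) t) (Complex a1 b1)" using t by (auto simp: in_box_complex_iff)
    have cb1: "cbox (Complex (-a1) t) (Complex a1 b1) \<subseteq> P" using t a1 b1 by (auto simp: in_cbox_complex_iff inP)
    have pim1: "path_image \<gamma> \<subseteq> P - {w}"
      using path_image_rectpath_cbox_minus_box[of "Complex (-a1) t" "Complex a1 b1"] cb1 wbox t a1
      by (auto simp: \<gamma>_def)
    have wP: "w \<in> interior P" using t a1 b1 by (simp add: interior_open openP inP abs_less_iff)
    have "((\<lambda>u. F u/(u-w)) has_contour_integral (2*pi*\<i>*winding_number \<gamma> w * F w)) \<gamma>"
      by (rule Cauchy_integral_formula_convex_simple[OF convP holF' wP]) (use pim1 in \<open>auto simp: \<gamma>_def\<close>)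
    then have "contour_integral \<gamma> (\<lambda>u. F u/(u-w)) = 2*pi*\<i>*F w"
      using winding_number_rectpath[OF wbox] by (simp add: \<gamma>_def contour_integral_unique)
    moreover have "continuous_on (path_image \<gamma>) (\<lambda>u. F u/(u-w))"
      using pim1 by (intro continuous_intros continuous_on_subset[OF contF]) auto
    ultimately have eqU: "I (Complex (-a1) t) (Complex a1 t) F w + I (Complex a1 t) (Complex a1 b1) F w
       + I (Complex a1 b1) (Complex (-a1) b1) F w + I (Complex (-a1) b1) (Complex (-a1) t) F w = 2*pi*\<i>*F w"
      using rect_split[of "Complex (-a1) t" "Complex a1 b1" "\<lambda>u. F u/(u-w)"] by (simp add: I_def \<gamma>_def)
    have cb2: "cbox (Complex (-a1) (-b1)) (Complex a1 (-t)) \<subseteq> Q" using t a1 b1 by (auto simp: in_cbox_complex_iff inQ)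
    have pim2: "path_image \<gamma>' \<subseteq> Q"
      using path_image_rectpath_subset_cbox[of "Complex (-a1) (-b1)" "Complex a1 (-t)"] cb2 t a1 b1
      by (auto simp: \<gamma>'_def)
    have wQ: "w \<notin> Q" using t by (auto simp: inQ)
    have holgw: "(\<lambda>u. g u/(u-w)) holomorphic_on Q"
      using wQ by (intro holomorphic_intros holg) auto
    have "((\<lambda>u. g u/(u-w)) has_contour_integral 0) \<gamma>'"
      by (rule Cauchy_theorem_convex_simple[OF holgw convQ]) (use pim2 in \<open>auto simp: \<gamma>'_def\<close>)
    then have "contour_integral \<gamma>' (\<lambda>u. g u/(u-w)) = 0" by (rule contour_integral_unique)
    moreover have "continuous_on (path_image \<gamma>') (\<lambda>u. g u/(u-w))"
      using pim2 wQ by (intro continuous_intros continuous_on_subset[OF contg]) auto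
    ultimately have eqL: "I (Complex (-a1) (-b1)) (Complex a1 (-b1)) g w + I (Complex a1 (-b1)) (Complex a1 (-t)) g w
       + I (Complex a1 (-t)) (Complex (-a1) (-t)) g w + I (Complex (-a1) (-t)) (Complex (-a1) (-b1)) g w = 0"
      using rect_split[of "Complex (-a1) (-b1)" "Complex a1 (-t)" "\<lambda>u. g u/(u-w)"] by (simp add: I_def \<gamma>'_def)
    have hH: "2*pi*\<i> * H t w = I (Complex a1 t) (Complex a1 b1) F w + I (Complex a1 b1) (Complex (-a1) b1) F w
      + I (Complex (-a1) b1) (Complex (-a1) t) F w + I (Complex (-a1) (-b1)) (Complex a1 (-b1)) g w
      + I (Complex a1 (-b1)) (Complex a1 (-t)) g w + I (Complex (-a1) (-t)) (Complex (-a1) (-b1)) g w"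
      unfolding H_def by simp
    show ?thesis
      by (rule lin6[OF eqU eqL hH]) (simp add: right_diff_distrib)
  qed
  have diff: "norm (H s w - H t w) \<le> 8*M/a1 * (t - s)"
    if st: "0 < s" "s \<le> t" "t \<le> b1" and w: "w \<in> cball 0 r" for s t w
  proof -
    have nw: "norm w \<le> r" using w by simp
    have rew: "\<bar>Re w\<bar> \<le> a1/2" using abs_Re_le_cmod[of w] nw r by linarith
    have far: "a1/2 \<le> norm (u - w)" if "Re u = a1 \<or> Re u = -a1" for u
      using abs_Re_le_cmod[of "u-w"] rew that a1 by auto
    have ne: "u - w \<noteq> 0" if "Re u = a1 \<or> Re u = -a1" for u using far[OF that] a1 by auto
    have ne2: "u - w \<noteq> 0" if "Im u = b1 \<or> Im u = -b1" for u
    proof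
      assume "u - w = 0"
      then have "u = w" by simp
      then have "b1 \<le> norm w" using abs_Im_le_cmod[of w] that by auto
      then show False using nw r \<rho> by auto
    qed
    have cF: "continuous_on (closed_segment p q) (\<lambda>u. F u/(u-w))"
      if "closed_segment p q \<subseteq> P" "\<And>u. u \<in> closed_segment p q \<Longrightarrow> u - w \<noteq> 0" for p q
      using that by (intro continuous_intros continuous_on_subset[OF contF]) auto
    have cg: "continuous_on (closed_segment p q) (\<lambda>u. g u/(u-w))"
      if "closed_segment p q \<subseteq> Q" "\<And>u. u \<in> closed_segment p q \<Longrightarrow> u - w \<noteq> 0" for p q
      using that by (intro continuous_intros continuous_on_subset[OF contg]) auto
    have e1: "I (Complex a1 s) (Complex a1 b1) F w = I (Complex a1 s) (Complex a1 t) F w + I (Complex a1 t) (Complex a1 b1) F w"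
      unfolding I_def using st a1 b1 rew
      by (intro contour_integral_split_linepath cF) (auto simp: vseg inP closed_segment_eq_real_ivl abs_le_iff intro!: ne)
    have e2: "I (Complex (-a1) b1) (Complex (-a1) s) F w = I (Complex (-a1) b1) (Complex (-a1) t) F w + I (Complex (-a1) t) (Complex (-a1) s) F w"
      unfolding I_def using st a1 b1 rew
      by (intro contour_integral_split_linepath cF) (auto simp: vseg inP closed_segment_eq_real_ivl abs_le_iff intro!: ne)
    have e3: "I (Complex a1 (-b1)) (Complex a1 (-s)) g w = I (Complex a1 (-b1)) (Complex a1 (-t)) g w + I (Complex a1 (-t)) (Complex a1 (-s)) g w"
      unfolding I_def using st a1 b1 rew
      by (intro contour_integral_split_linepath cg) (auto simp: vseg inQ closed_segment_eq_real_ivl abs_le_iff intro!: ne)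
    have e4: "I (Complex (-a1) (-s)) (Complex (-a1) (-b1)) g w = I (Complex (-a1) (-s)) (Complex (-a1) (-t)) g w + I (Complex (-a1) (-t)) (Complex (-a1) (-b1)) g w"
      unfolding I_def using st a1 b1 rew
      by (intro contour_integral_split_linepath cg) (auto simp: vseg inQ closed_segment_eq_real_ivl abs_le_iff intro!: ne)
    have eq: "2*pi*\<i> * (H s w - H t w) = I (Complex a1 s) (Complex a1 t) F w + I (Complex (-a1) t) (Complex (-a1) s) F w
       + I (Complex a1 (-t)) (Complex a1 (-s)) g w + I (Complex (-a1) (-s)) (Complex (-a1) (-t)) g w"
    proof -
      have hs: "\<And>t. 2*pi*\<i> * H t w = I (Complex a1 t) (Complex a1 b1) F w + I (Complex a1 b1) (Complex (-a1) b1) F w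
      + I (Complex (-a1) b1) (Complex (-a1) t) F w + I (Complex (-a1) (-b1)) (Complex a1 (-b1)) g w
      + I (Complex a1 (-b1)) (Complex a1 (-t)) g w + I (Complex (-a1) (-t)) (Complex (-a1) (-b1)) g w"
        unfolding H_def by simp
      show ?thesis unfolding right_diff_distrib hs e1 e2 e3 e4 by (simp add: algebra_simps)
    qed
    have bF: "norm (I p q F w) \<le> M/(a1/2) * norm (q - p)"
      if "closed_segment p q \<subseteq> P" "\<And>u. u \<in> closed_segment p q \<Longrightarrow> Re u = a1 \<or> Re u = -a1" for p q
      unfolding I_def
      by (rule seg_small) (use that a1 bndP far ne in \<open>auto intro!: continuous_intros continuous_on_subset[OF contF]\<close>)
    have bg: "norm (I p q g w) \<le> M/(a1/2) * norm (q - p)"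
      if "closed_segment p q \<subseteq> Q" "\<And>u. u \<in> closed_segment p q \<Longrightarrow> Re u = a1 \<or> Re u = -a1" for p q
      unfolding I_def
      by (rule seg_small) (use that a1 bndQ far ne in \<open>auto intro!: continuous_intros continuous_on_subset[OF contg]\<close>)
    have b1': "norm (I (Complex a1 s) (Complex a1 t) F w) \<le> M/(a1/2) * (t - s)"
    proof -
      have "closed_segment (Complex a1 s) (Complex a1 t) \<subseteq> P" using st a1 b1 by (auto simp: vseg inP closed_segment_eq_real_ivl)
      moreover have "\<And>u. u \<in> closed_segment (Complex a1 s) (Complex a1 t) \<Longrightarrow> Re u = a1 \<or> Re u = -a1" by (simp add: vseg)
      ultimately have "norm (I (Complex a1 s) (Complex a1 t) F w) \<le> M/(a1/2) * norm ((Complex a1 t) - (Complex a1 s))" by (rule bF)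
      moreover have "norm ((Complex a1 t) - (Complex a1 s)) = t - s" using st by (simp add: normv)
      ultimately show ?thesis by simp
    qed
    have b2': "norm (I (Complex (-a1) t) (Complex (-a1) s) F w) \<le> M/(a1/2) * (t - s)"
    proof -
      have "closed_segment (Complex (-a1) t) (Complex (-a1) s) \<subseteq> P" using st a1 b1 by (auto simp: vseg inP closed_segment_eq_real_ivl)
      moreover have "\<And>u. u \<in> closed_segment (Complex (-a1) t) (Complex (-a1) s) \<Longrightarrow> Re u = a1 \<or> Re u = -a1" by (simp add: vseg)
      ultimately have "norm (I (Complex (-a1) t) (Complex (-a1) s) F w) \<le> M/(a1/2) * norm ((Complex (-a1) s) - (Complex (-a1) t))" by (rule bF)
      moreover have "norm ((Complex (-a1) s) - (Complex (-a1) t)) = t - s" using st by (simp add: normv)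
      ultimately show ?thesis by simp
    qed
    have b3': "norm (I (Complex a1 (-t)) (Complex a1 (-s)) g w) \<le> M/(a1/2) * (t - s)"
    proof -
      have "closed_segment (Complex a1 (-t)) (Complex a1 (-s)) \<subseteq> Q" using st a1 b1 by (auto simp: vseg inQ closed_segment_eq_real_ivl)
      moreover have "\<And>u. u \<in> closed_segment (Complex a1 (-t)) (Complex a1 (-s)) \<Longrightarrow> Re u = a1 \<or> Re u = -a1" by (simp add: vseg)
      ultimately have "norm (I (Complex a1 (-t)) (Complex a1 (-s)) g w) \<le> M/(a1/2) * norm ((Complex a1 (-s)) - (Complex a1 (-t)))" by (rule bg)
      moreover have "norm ((Complex a1 (-s)) - (Complex a1 (-t))) = t - s" using st by (simp add: normv)
      ultimately show ?thesis by simp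
    qed
    have b4': "norm (I (Complex (-a1) (-s)) (Complex (-a1) (-t)) g w) \<le> M/(a1/2) * (t - s)"
    proof -
      have "closed_segment (Complex (-a1) (-s)) (Complex (-a1) (-t)) \<subseteq> Q" using st a1 b1 by (auto simp: vseg inQ closed_segment_eq_real_ivl)
      moreover have "\<And>u. u \<in> closed_segment (Complex (-a1) (-s)) (Complex (-a1) (-t)) \<Longrightarrow> Re u = a1 \<or> Re u = -a1" by (simp add: vseg)
      ultimately have "norm (I (Complex (-a1) (-s)) (Complex (-a1) (-t)) g w) \<le> M/(a1/2) * norm ((Complex (-a1) (-t)) - (Complex (-a1) (-s)))" by (rule bg)
      moreover have "norm ((Complex (-a1) (-t)) - (Complex (-a1) (-s))) = t - s" using st by (simp add: normv)
      ultimately show ?thesis by simp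
    qed
    have "norm (2*pi*\<i> * (H s w - H t w)) \<le> 4 * (M/(a1/2) * (t - s))"
      unfolding eq by (rule order_trans[OF norm_triangle_le[OF add_mono[OF norm_triangle_le[OF add_mono[OF norm_triangle_le[OF add_mono[OF b1' b2']] b3']] b4']]]) simp
    moreover have "norm (H s w - H t w) \<le> norm (2*pi*\<i> * (H s w - H t w))"
    proof -
      have e: "norm (2*pi*\<i> * (H s w - H t w)) = 2*pi * norm (H s w - H t w)" by (simp add: norm_mult)
      have "1 \<le> 2*pi" using pi_gt3 by linarith
      from mult_right_mono[OF this norm_ge_zero[of "H s w - H t w"]] show ?thesis unfolding e by simp
    qed
    moreover have "4 * (M/(a1/2) * (t - s)) = 8*M/a1 * (t - s)" using a1 by (simp add: field_simps)
    ultimately show ?thesis by (metis order_trans)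
  qed
  define tn where "tn = (\<lambda>n::nat. b1 / real (n+2))"
  have tnpos: "0 < tn n" for n using b1 by (simp add: tn_def)
  have tnle: "tn n \<le> b1" for n using b1 by (simp add: tn_def divide_simps)
  have tn0: "tn \<longlonglongrightarrow> 0"
    unfolding tn_def using LIMSEQ_ignore_initial_segment[OF lim_const_over_n[of b1], of 2] by simp
  have ucauchy: "uniformly_Cauchy_on (cball 0 r) (\<lambda>n. H (tn n))"
  proof (rule uniformly_Cauchy_onI)
    fix e :: real assume e: "e > 0"
    obtain N :: nat where N: "8*M/a1*b1/e < real N" using reals_Archimedean2 by blast
    define X where "X = 8*M/a1"
    have X: "0 \<le> X" using M a1 by (simp add: X_def)
    have bndk: "tn k \<le> b1/(real N + 2)" if "N \<le> k" for k
      unfolding tn_def using that b1 by (intro divide_left_mono) auto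
    have key: "norm (H s w - H t w) \<le> X * (b1/(real N+2))"
      if "0<s" "s \<le> t" "t \<le> b1/(real N+2)" "t \<le> b1" "w \<in> cball 0 r" for s t w
    proof -
      have "norm (H s w - H t w) \<le> X * (t - s)" using diff[OF that(1,2,4,5)] by (simp add: X_def)
      also have "\<dots> \<le> X * (b1/(real N+2))" using that X by (intro mult_left_mono) auto
      finally show ?thesis .
    qed
    have lt: "X * (b1/(real N+2)) < e"
    proof -
      have "X*b1/e < real N" using N by (simp add: X_def)
      then have "X*b1 < e * real N" using e by (simp add: divide_less_eq mult.commute)
      also have "\<dots> \<le> e * (real N + 2)" using e by simp
      finally have "X*b1 < e * (real N + 2)" .
      then show ?thesis by (simp add: pos_divide_less_eq)
    qed
    show "\<exists>N. \<forall>x\<in>cball 0 r. \<forall>m\<ge>N. \<forall>n\<ge>N. dist (H (tn m) x) (H (tn n) x) < e"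
    proof (intro exI ballI allI impI)
      fix w :: complex and m n assume w: "w \<in> cball 0 r" and m: "N \<le> m" and n: "N \<le> n"
      have "dist (H (tn m) w) (H (tn n) w) \<le> X * (b1/(real N+2))"
      proof (cases "tn n \<le> tn m")
        case True
        then show ?thesis using key[OF tnpos True bndk[OF m] tnle w]
          by (simp add: dist_norm norm_minus_commute)
      next
        case False
        then show ?thesis using key[OF tnpos _ bndk[OF n] tnle w, of m]
          by (simp add: dist_norm)
      qed
      then show "dist (H (tn m) w) (H (tn n) w) < e" using lt by linarith
    qed
  qed
  obtain Hl where ul: "uniform_limit (cball 0 r) (\<lambda>n. H (tn n)) Hl sequentially"
    using Cauchy_uniformly_convergent[OF ucauchy] unfolding uniformly_convergent_on_def by blast
  have ch: "continuous_on (cball 0 r) (H (tn n)) \<and> H (tn n) holomorphic_on ball 0 r" for n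
  proof
    have h: "H (tn n) holomorphic_on ball 0 \<rho>" by (rule holH[OF tnpos tnle])
    have sub: "cball 0 r \<subseteq> ball 0 \<rho>" using r by auto
    show "continuous_on (cball 0 r) (H (tn n))"
      using holomorphic_on_imp_continuous_on[OF holomorphic_on_subset[OF h sub]] .
    show "H (tn n) holomorphic_on ball 0 r"
      by (rule holomorphic_on_subset[OF h]) (use r in auto)
  qed
  obtain holHl: "Hl holomorphic_on ball 0 r"
    using holomorphic_uniform_limit[OF always_eventually[OF allI[OF ch]] ul trivial_limit_sequentially] by blast
  have agree: "Hl w = F w" if w: "w \<in> ball 0 r" "0 < Im w" for w
  proof -
    define d where "d = Im w"
    have d: "0 < d" "d < b1" using w abs_Im_le_cmod[of w] r \<rho> by (auto simp: d_def)
    have rew: "\<bar>Re w\<bar> < a1" using w abs_Re_le_cmod[of w] r \<rho> by auto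
    have lim1: "(\<lambda>n. H (tn n) w) \<longlonglongrightarrow> Hl w"
      using tendsto_uniform_limitI[OF ul, of w] w by auto
    have lim2: "(\<lambda>n. H (tn n) w) \<longlonglongrightarrow> F w"
    proof (rule LIMSEQ_I)
      fix e :: real assume e: "0 < e"
      define \<epsilon> where "\<epsilon> = e*d/(32*a1)"
      have \<epsilon>: "0 < \<epsilon>" using e d a1 by (simp add: \<epsilon>_def)
      obtain \<tau> where \<tau>: "\<tau> > 0" "\<forall>u\<in>P. Im u < \<tau> \<longrightarrow> \<bar>Im (F u)\<bar> \<le> \<epsilon>"
        using lim[OF \<epsilon>] by (auto simp: P_def)
      define \<delta> where "\<delta> = min \<tau> (min (d/2) (e*d^2/(32*a1*(M+1))))"
      have \<delta>: "0 < \<delta>" using \<tau> d e a1 M by (simp add: \<delta>_def)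
      obtain N where N: "\<forall>n\<ge>N. tn n < \<delta>"
        using order_tendstoD(2)[OF tn0 \<delta>] by (auto simp: eventually_sequentially)
      show "\<exists>no. \<forall>n\<ge>no. norm (H (tn n) w - F w) < e"
      proof (intro exI allI impI)
        fix n assume n: "N \<le> n"
        define t where "t = tn n"
        have t: "0 < t" "t < \<tau>" "t \<le> d/2" "t \<le> e*d^2/(32*a1*(M+1))"
          using N n tnpos[of n] by (auto simp: t_def \<delta>_def)
        have id: "2*pi*\<i> * (F w - H t w) = I (Complex (-a1) t) (Complex a1 t) F w + I (Complex a1 (-t)) (Complex (-a1) (-t)) g w"
          by (rule ident) (use t d rew in \<open>auto simp: d_def\<close>)
        have segP: "closed_segment (Complex (-a1) t) (Complex a1 t) \<subseteq> P"
          using t d a1 b1 by (auto simp: hseg inP closed_segment_eq_real_ivl)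
        have pb: "norm (I (Complex (-a1) t) (Complex a1 t) F w + I (Complex a1 (-t)) (Complex (-a1) (-t)) g w)
             \<le> (8*M*t/(Im w)^2 + 4*\<epsilon>/Im w) * (2*a1)"
          unfolding I_def g_def
        proof (rule pair_bound)
          show "continuous_on (closed_segment (Complex (- a1) t) (Complex a1 t)) F"
            using contF segP by (rule continuous_on_subset)
          show "norm (F u) \<le> M \<and> \<bar>Im (F u)\<bar> \<le> \<epsilon>" if "u \<in> closed_segment (Complex (- a1) t) (Complex a1 t)" for u
            using that segP bndP \<tau>(2) t by (auto simp: hseg)
        qed (use t a1 d in \<open>auto simp: d_def\<close>)
        have A: "16*a1*M*t/d^2 \<le> e/2"
        proof -
          have "16*a1*M*t/d^2 \<le> 16*a1*M*(e*d^2/(32*a1*(M+1)))/d^2"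
            using t a1 M d by (intro divide_right_mono mult_left_mono) auto
          also have "\<dots> = e*M/(2*(M+1))"
          proof -
            have M1: "M + 1 \<noteq> 0" "a1 \<noteq> 0" "d \<noteq> 0" using M a1 d by auto
            have gen: "16*a1*M*(e*d^2/(32*a1*K))/d^2 = e*M/(2*K)" if "K \<noteq> 0" for K
              using that M1 by (simp add: field_simps power2_eq_square)
            show ?thesis by (rule gen) (use M1 in simp)
          qed
          also have "\<dots> \<le> e/2" using e M by (simp add: field_simps)
          finally show ?thesis .
        qed
        have B: "(8*M*t/(Im w)^2 + 4*\<epsilon>/Im w) * (2*a1) = 16*a1*M*t/d^2 + e/4"
          using a1 d by (simp add: \<epsilon>_def d_def field_simps power2_eq_square)
        have "norm (F w - H t w) \<le> norm (2*pi*\<i> * (F w - H t w))"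
        proof -
          have e: "norm (2*pi*\<i> * (F w - H t w)) = 2*pi * norm (F w - H t w)" by (simp add: norm_mult)
          have "1 \<le> 2*pi" using pi_gt3 by linarith
          from mult_right_mono[OF this norm_ge_zero[of "F w - H t w"]] show ?thesis unfolding e by simp
        qed
        also have "\<dots> \<le> 16*a1*M*t/d^2 + e/4" using pb id B by simp
        also have "\<dots> < e" using A e by linarith
        finally show "norm (H (tn n) w - F w) < e" by (simp add: t_def norm_minus_commute)
      qed
    qed
    show ?thesis using LIMSEQ_unique[OF lim1 lim2] .
  qed
  show ?thesis
    by (rule that[of r Hl]) (use r holHl agree in auto)
qed

lemma eventually_at_right_0_lt:
  assumes "(0::real) < s" shows "eventually (\<lambda>x. 0 < x \<and> x < s) (at_right 0)"
  unfolding eventually_at_right_field using assms by auto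

lemma phi_deriv_pos:
  fixes \<Phi> :: "complex \<Rightarrow> complex"
  assumes hol: "\<Phi> holomorphic_on ball 0 r" and r: "0 < r" and z0: "\<Phi> 0 = 0"
    and real: "\<And>x. x \<in> ball 0 r \<Longrightarrow> Im x = 0 \<Longrightarrow> Im (\<Phi> x) = 0"
    and up: "\<And>w. w \<in> ball 0 r \<Longrightarrow> 0 < Im w \<Longrightarrow> 0 < Im (\<Phi> w)"
  shows "deriv \<Phi> 0 \<in> \<real>" "0 < Re (deriv \<Phi> 0)"
proof -
  have nc: "\<not> \<Phi> constant_on ball 0 r"
  proof
    assume "\<Phi> constant_on ball 0 r"
    then obtain k where k: "\<And>w. w \<in> ball 0 r \<Longrightarrow> \<Phi> w = k" by (auto simp: constant_on_def)
    have "k = 0" using k[of 0] z0 r by auto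
    moreover have "0 < Im (\<Phi> (\<i> * of_real (r/2)))" using r by (intro up) (auto simp: norm_mult)
    ultimately show False using k[of "\<i> * of_real (r/2)"] r by (auto simp: norm_mult)
  qed
  have zb: "0 \<in> ball (0::complex) r" using r by simp
  obtain g s n where n: "0 < n" and s: "0 < s" "ball (0::complex) s \<subseteq> ball 0 r"
      and holg: "g holomorphic_on ball 0 s" and fac: "\<And>w. w \<in> ball 0 s \<Longrightarrow> \<Phi> w = (w - 0)^n * g w"
      and gnz: "\<And>w. w \<in> ball 0 s \<Longrightarrow> g w \<noteq> 0"
    apply (rule holomorphic_factor_zero_nonconstant[OF hol open_ball connected_ball zb z0 nc])
    subgoal for g' ra n' by (rule that[of n' ra g']) assumption+
    done
  have contg: "continuous_on (ball 0 s) g" using holg holomorphic_on_imp_continuous_on by blast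
  have gcont0: "isCont g 0" using contg s by (simp add: continuous_on_eq_continuous_at)
  have img0: "Im (g 0) = 0"
  proof -
    have lim: "((\<lambda>x::real. Im (g (of_real x))) \<longlongrightarrow> Im (g 0)) (at_right 0)"
    proof -
      have "((\<lambda>x::real. of_real x :: complex) \<longlongrightarrow> 0) (at_right 0)"
        by (rule tendsto_eq_intros | simp)+
      from isCont_tendsto_compose[OF gcont0 this] show ?thesis by (intro tendsto_intros)
    qed
    have ev: "eventually (\<lambda>x::real. Im (g (of_real x)) = 0) (at_right 0)"
      using eventually_at_right_0_lt[OF s(1)]
    proof eventually_elim
      case (elim x)
      then have xb: "of_real x \<in> ball (0::complex) s" by simp
      have "of_real x \<in> ball (0::complex) r" using s(2) xb by blast
      then have "Im (\<Phi> (of_real x)) = 0" using real[of "of_real x"] by simp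
      moreover have "\<Phi> (of_real x) = of_real (x^n) * g (of_real x)" using fac[OF xb] by simp
      ultimately show ?case using elim by simp
    qed
    have "((\<lambda>x::real. Im (g (of_real x))) \<longlongrightarrow> 0) (at_right 0)"
      using tendsto_eventually[OF ev] .
    from tendsto_unique[OF _ lim this] show ?thesis by simp
  qed
  define \<alpha> where "\<alpha> = Re (g 0)"
  have g0: "g 0 = of_real \<alpha>" using img0 by (simp add: \<alpha>_def complex_eq_iff)
  have \<alpha>nz: "\<alpha> \<noteq> 0" using gnz[of 0] s g0 by auto
  have sgn: "0 \<le> \<alpha> * sin (real n * \<theta>)" if th: "0 < \<theta>" "\<theta> < pi" for \<theta>
  proof -
    define h where "h = (\<lambda>x::real. Im (cis (real n * \<theta>) * g (of_real x * cis \<theta>)))"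
    have lim: "(h \<longlongrightarrow> Im (cis (real n * \<theta>) * g 0)) (at_right 0)"
    proof -
      have "((\<lambda>x::real. of_real x * cis \<theta>) \<longlongrightarrow> 0) (at_right 0)"
        by (rule tendsto_eq_intros | simp)+
      from isCont_tendsto_compose[OF gcont0 this] show ?thesis unfolding h_def by (intro tendsto_intros)
    qed
    have sinpos: "0 < sin \<theta>" using th by (simp add: sin_gt_zero)
    have ev: "eventually (\<lambda>x. 0 \<le> h x) (at_right 0)"
      using eventually_at_right_0_lt[OF s(1)]
    proof eventually_elim
      case (elim x)
      define w where "w = of_real x * cis \<theta>"
      have wb: "w \<in> ball 0 s" using elim by (simp add: w_def norm_mult)
      have "w \<in> ball 0 r" using s(2) wb by blast
      then have "0 < Im (\<Phi> w)"
        using up[of w] elim sinpos by (auto simp: w_def)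
      moreover have "\<Phi> w = of_real (x^n) * (cis (real n * \<theta>) * g w)"
        using fac[OF wb] by (simp add: w_def power_mult_distrib Complex.DeMoivre)
      ultimately have "0 < x^n * h x" by (simp add: h_def w_def)
      then show ?case using elim by (simp add: zero_less_mult_iff)
    qed
    have "0 \<le> Im (cis (real n * \<theta>) * g 0)"
      by (rule tendsto_lowerbound[OF lim ev]) simp
    then show ?thesis by (simp add: g0 mult.commute)
  qed
  have n1: "n = 1"
  proof (rule ccontr)
    assume "n \<noteq> 1"
    with n have n2: "2 \<le> n" by simp
    have a1: "0 \<le> \<alpha>" using sgn[of "pi/(2*n)"] n2 pi_gt_zero
      by (simp add: field_simps)
    have p1: "pi / (2 * real n) < pi" using n2 pi_gt_zero by (simp add: field_simps)
    have p2: "3*pi/(2*real n) < pi" using n2 pi_gt_zero by (simp add: field_simps)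
    have a2: "0 \<le> - \<alpha>"
    proof -
      have "0 < 3*pi/(2*real n)" using n2 pi_gt_zero by simp
      from sgn[OF this p2] have A: "0 \<le> \<alpha> * sin (real n * (3*pi/(2*real n)))" .
      have B: "real n * (3*pi/(2*real n)) = 3*pi/2" using n2 by (simp add: field_simps)
      from A have A': "0 \<le> \<alpha> * sin (3*pi/2)" by (simp only: B)
      moreover have "sin (3*pi/2) = -1"
      proof -
        have e: "3*pi/2 = pi/2 + pi" by simp
        have "sin (pi/2 + pi) = - sin (pi/2)" by (rule sin_periodic_pi)
        then show ?thesis unfolding e by simp
      qed
      ultimately show ?thesis by simp
    qed
    show False using a1 a2 \<alpha>nz by simp
  qed
  have apos: "0 < \<alpha>" using sgn[of "pi/2"] n1 \<alpha>nz pi_gt_zero by (simp add: less_le)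
  have zs: "0 \<in> ball (0::complex) s" using s by simp
  have "((\<lambda>w. w * g w) has_field_derivative (1 * g 0 + deriv g 0 * 0)) (at 0)"
    by (rule DERIV_mult[OF DERIV_ident holomorphic_derivI[OF holg open_ball zs]])
  then have "((\<lambda>w. w * g w) has_field_derivative g 0) (at 0)" by simp
  then have "(\<Phi> has_field_derivative g 0) (at 0)"
    by (rule has_field_derivative_transform_within_open[of _ _ _ "ball 0 s"]) (use s fac n1 in auto)
  then have "deriv \<Phi> 0 = of_real \<alpha>" using g0 by (simp add: DERIV_imp_deriv)
  then show "deriv \<Phi> 0 \<in> \<real>" "0 < Re (deriv \<Phi> 0)" using apos by auto
qed

lemma isCont_eps:
  fixes f :: "complex \<Rightarrow> complex"
  assumes "isCont f a" "0 < e"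
  obtains d where "0 < d" "\<And>x. norm (x - a) < d \<Longrightarrow> norm (f x - f a) < e"
proof -
  obtain d where d: "0 < d" "\<forall>x. x \<noteq> a \<and> norm (x - a) < d \<longrightarrow> norm (f x - f a) < e"
    using LIM_D[OF assms(1)[unfolded isCont_def] assms(2)] by blast
  show ?thesis
  proof (rule that[OF d(1)])
    fix x assume "norm (x - a) < d"
    then show "norm (f x - f a) < e" using d(2) assms(2) by (cases "x = a") auto
  qed
qed

lemma phi_estimate:
  fixes \<Phi> :: "complex \<Rightarrow> complex"
  assumes hol: "\<Phi> holomorphic_on ball 0 r" and r: "0 < r"
    and real: "\<And>x. x \<in> ball 0 r \<Longrightarrow> Im x = 0 \<Longrightarrow> Im (\<Phi> x) = 0"
    and dreal: "deriv \<Phi> 0 \<in> \<real>" and \<delta>: "0 < \<delta>"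
  obtains \<eta> where "0 < \<eta>" "\<eta> \<le> r"
    "\<And>w. w \<in> ball 0 \<eta> \<Longrightarrow> \<bar>Im (\<Phi> w) - Re (deriv \<Phi> 0) * Im w\<bar> \<le> \<delta> * \<bar>Im w\<bar>"
proof -
  have contd: "continuous_on (ball 0 r) (deriv \<Phi>)"
    by (intro holomorphic_on_imp_continuous_on holomorphic_deriv hol open_ball)
  then have "isCont (deriv \<Phi>) 0" using r by (simp add: continuous_on_eq_continuous_at)
  then obtain \<eta>0 where \<eta>0: "0 < \<eta>0" "\<And>u. norm (u - 0) < \<eta>0 \<Longrightarrow> norm (deriv \<Phi> u - deriv \<Phi> 0) < \<delta>"
    using isCont_eps \<delta> by blast
  define \<eta> where "\<eta> = min \<eta>0 r"
  have \<eta>: "0 < \<eta>" "\<eta> \<le> r" "\<eta> \<le> \<eta>0" using \<eta>0 r by (auto simp: \<eta>_def)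
  define c where "c = deriv \<Phi> 0"
  have cre: "c = of_real (Re c)" using dreal by (simp add: c_def complex_is_Real_iff complex_eq_iff)
  define \<psi> where "\<psi> = (\<lambda>u. \<Phi> u - c * u)"
  have sub: "ball (0::complex) \<eta> \<subseteq> ball 0 r" using \<eta> by auto
  have der: "(\<psi> has_field_derivative (deriv \<Phi> u - c)) (at u within ball 0 \<eta>)" if "u \<in> ball 0 \<eta>" for u
  proof -
    have "(\<Phi> has_field_derivative deriv \<Phi> u) (at u within ball 0 \<eta>)"
      using holomorphic_derivI[OF hol open_ball] that sub by blast
    then show ?thesis unfolding \<psi>_def
      by (intro derivative_eq_intros) auto
  qed
  have bnd: "norm (deriv \<Phi> u - c) \<le> \<delta>" if "u \<in> ball 0 \<eta>" for u
    using \<eta>0(2)[of u] that \<eta> by (simp add: c_def dist_norm) 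
  show ?thesis
  proof (rule that[OF \<eta>(1,2)])
    fix w :: complex assume w: "w \<in> ball 0 \<eta>"
    define x where "x = complex_of_real (Re w)"
    have xin: "x \<in> ball 0 \<eta>" using w abs_Re_le_cmod[of w] by (simp add: x_def)
    have "norm (\<psi> w - \<psi> x) \<le> \<delta> * norm (w - x)"
      by (rule field_differentiable_bound[OF convex_ball der bnd w xin])
    moreover have "norm (w - x) = \<bar>Im w\<bar>"
    proof -
      have "w - x = \<i> * of_real (Im w)" by (simp add: x_def complex_eq_iff)
      then show ?thesis by (simp add: norm_mult)
    qed
    moreover have "Im (\<psi> w - \<psi> x) = Im (\<Phi> w) - Re (deriv \<Phi> 0) * Im w"
    proof -
      have "x \<in> ball 0 r" using xin sub by blast
      then have "Im (\<Phi> x) = 0" using real[of x] by (simp add: x_def)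
      moreover have "Im (c * w) = Re c * Im w" "Im (c * x) = 0"
        by (subst cre, simp add: x_def)+
      ultimately show ?thesis by (simp add: \<psi>_def c_def)
    qed
    ultimately show "\<bar>Im (\<Phi> w) - Re (deriv \<Phi> 0) * Im w\<bar> \<le> \<delta> * \<bar>Im w\<bar>"
      using abs_Im_le_cmod[of "\<psi> w - \<psi> x"] by (metis order_trans)
  qed
qed

theorem lemma14:
  fixes A B :: "complex set" and T :: "complex \<Rightarrow> complex" and R :: real
  assumes "open A" "connected A" "A \<subseteq> ball 0 1"
    and "open B" "connected B" "B \<subseteq> ball 0 1"
    and "R > 0"
    and "A \<inter> ball 1 R = ball 0 1 \<inter> ball 1 R"
    and "B \<inter> ball 1 R = ball 0 1 \<inter> ball 1 R"
    and "T holomorphic_on A" and "bij_betw T A B"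
    and "(T \<longlongrightarrow> 1) (at 1 within A)"
  shows "\<exists>r>0. \<exists>S. S holomorphic_on ball 1 r \<and> (\<forall>z\<in>A \<inter> ball 1 r. S z = T z)
           \<and> deriv S 1 \<in> \<real> \<and> Re (deriv S 1) > 0
           \<and> (\<forall>\<delta>>0. \<exists>\<epsilon>>0. \<forall>z\<in>A \<inter> ball 1 \<epsilon>.
                 norm z powr (Re (deriv S 1) + \<delta>) \<le> norm (T z) \<and>
                 norm (T z) \<le> norm z powr (Re (deriv S 1) - \<delta>))"
proof -
  note oA = assms(1) and AD = assms(3) and BD = assms(6) and R = assms(7)
    and AR = assms(8) and BR = assms(9) and holT = assms(10) and bij = assms(11) and limT = assms(12)
  have TB: "T z \<in> B" if "z \<in> A" for z using bij that by (auto simp: bij_betw_def)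
  have injT: "inj_on T A" using bij by (auto simp: bij_betw_def)
  have imT: "T ` A = B" using bij by (auto simp: bij_betw_def)
  have nA: "norm z < 1" if "z \<in> A" for z using AD that by auto
  have nB: "norm \<zeta> < 1" if "\<zeta> \<in> B" for \<zeta> using BD that by auto
  have inA: "z \<in> A" if "norm z < 1" "dist z 1 < R" for z
  proof -
    have "z \<in> ball 0 1 \<inter> ball 1 R" using that by (simp add: dist_commute)
    then show ?thesis using AR by blast
  qed
  have inB: "\<zeta> \<in> B" if "norm \<zeta> < 1" "dist \<zeta> 1 < R" for \<zeta>
  proof -
    have "\<zeta> \<in> ball 0 1 \<inter> ball 1 R" using that by (simp add: dist_commute)
    then show ?thesis using BR by blast
  qed
  define \<epsilon>0 where "\<epsilon>0 = min (R/2) (1/2)"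
  have \<epsilon>0: "0 < \<epsilon>0" "\<epsilon>0 < R" "\<epsilon>0 \<le> 1/2" using R by (auto simp: \<epsilon>0_def)
  obtain \<eta>1 where \<eta>1: "0 < \<eta>1" "\<And>z. z \<in> A \<Longrightarrow> z \<noteq> 1 \<Longrightarrow> dist z 1 < \<eta>1 \<Longrightarrow> dist (T z) 1 < \<epsilon>0"
  proof -
    have "eventually (\<lambda>z. dist (T z) 1 < \<epsilon>0) (at 1 within A)"
      using limT \<epsilon>0(1) by (simp add: tendsto_iff)
    then obtain d where "d > 0" "\<forall>z\<in>A. z \<noteq> 1 \<and> dist z 1 < d \<longrightarrow> dist (T z) 1 < \<epsilon>0"
      by (auto simp: eventually_at)
    then show ?thesis using that by blast
  qed
  define \<eta> where "\<eta> = min \<eta>1 R"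
  have \<eta>: "0 < \<eta>" "\<eta> \<le> R" "\<eta> \<le> \<eta>1" using \<eta>1 R by (auto simp: \<eta>_def)
  have Tnear: "dist (T z) 1 < \<epsilon>0" if "z \<in> A" "dist z 1 < \<eta>" for z
  proof -
    have "z \<noteq> 1" using nA[OF that(1)] by auto
    then show ?thesis using \<eta>1(2)[OF that(1)] that \<eta> by auto
  qed
  obtain Ti where holTi: "Ti holomorphic_on T ` A" and TiT: "\<And>z. z \<in> A \<Longrightarrow> Ti (T z) = z"
    using holomorphic_has_inverse[OF holT oA injT] by metis
  have U: "\<exists>\<theta>>0. \<forall>z\<in>A. dist z 1 < \<eta> \<longrightarrow> 1 - \<theta> < norm z \<longrightarrow> 1 - \<kappa> < norm (T z)" if \<kappa>: "0 < \<kappa>" for \<kappa>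
  proof -
    define K where "K = cball (1::complex) \<epsilon>0 \<inter> cball 0 (1 - \<kappa>)"
    have cK: "compact K" unfolding K_def by (intro compact_Int_closed compact_cball closed_cball)
    have KB: "K \<subseteq> B"
    proof
      fix \<zeta> assume "\<zeta> \<in> K"
      then have "norm \<zeta> < 1" "dist \<zeta> 1 < R" using \<kappa> \<epsilon>0 by (auto simp: K_def dist_commute)
      then show "\<zeta> \<in> B" by (rule inB)
    qed
    have contTi: "continuous_on K Ti"
      using holomorphic_on_imp_continuous_on[OF holTi] KB imT continuous_on_subset by blast
    have cTK: "compact (Ti ` K)" by (rule compact_continuous_image[OF contTi cK])
    have TKA: "Ti ` K \<subseteq> A"
    proof
      fix y assume "y \<in> Ti ` K"
      then obtain \<zeta> where "\<zeta> \<in> K" "y = Ti \<zeta>" by auto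
      then obtain z where "z \<in> A" "\<zeta> = T z" using KB imT by blast
      then show "y \<in> A" using \<open>y = Ti \<zeta>\<close> TiT by simp
    qed
    obtain \<theta> where \<theta>: "0 < \<theta>" "\<And>y. y \<in> Ti ` K \<Longrightarrow> norm y \<le> 1 - \<theta>"
    proof (cases "Ti ` K = {}")
      case True
      then show ?thesis using that[of 1] by auto
    next
      case False
      have "compact (norm ` (Ti ` K))"
        by (intro compact_continuous_image[OF _ cTK] continuous_intros)
      moreover have "norm ` (Ti ` K) \<noteq> {}" using False by auto
      ultimately obtain m where m: "m \<in> norm ` (Ti ` K)" "\<And>t. t \<in> norm ` (Ti ` K) \<Longrightarrow> t \<le> m"
        using compact_attains_sup by metis
      have "m < 1" using m(1) TKA nA by auto
      then show ?thesis using that[of "1 - m"] m(2) by auto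
    qed
    show ?thesis
    proof (intro exI[of _ \<theta>] conjI \<theta>(1) ballI impI)
      fix z assume z: "z \<in> A" "dist z 1 < \<eta>" "1 - \<theta> < norm z"
      show "1 - \<kappa> < norm (T z)"
      proof (rule ccontr)
        assume "\<not> 1 - \<kappa> < norm (T z)"
        then have "T z \<in> K" using Tnear[OF z(1,2)] by (auto simp: K_def dist_commute)
        then have "Ti (T z) \<in> Ti ` K" by blast
        then have "norm z \<le> 1 - \<theta>" using \<theta>(2) TiT[OF z(1)] by metis
        then show False using z(3) by simp
      qed
    qed
  qed
  obtain \<rho>0 where \<rho>0: "0 < \<rho>0" "\<And>w. norm (w - 0) < \<rho>0 \<Longrightarrow> norm (exp (\<i> * w) - exp (\<i> * 0)) < \<eta>"
    using isCont_eps[where f="\<lambda>w. exp (\<i> * w)" and a=0 and e=\<eta>] \<eta> by (auto intro: continuous_intros)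
  define a where "a = \<rho>0/2"
  have a: "0 < a" using \<rho>0 by (simp add: a_def)
  define P where "P = box (Complex (-a) 0) (Complex a a)"
  have inP: "w \<in> P \<longleftrightarrow> -a < Re w \<and> Re w < a \<and> 0 < Im w \<and> Im w < a" for w
    by (auto simp: P_def in_box_complex_iff)
  have expP: "exp (\<i> * w) \<in> A \<and> dist (exp (\<i> * w)) 1 < \<eta> \<and> norm (exp (\<i> * w)) = exp (- Im w)" if w: "w \<in> P" for w
  proof -
    have "norm w \<le> \<bar>Re w\<bar> + \<bar>Im w\<bar>" by (rule cmod_le)
    also have "\<dots> < \<rho>0" using w by (auto simp: inP a_def)
    finally have "norm (exp (\<i> * w) - exp (\<i> * 0)) < \<eta>" using \<rho>0(2)[of w] by simp
    then have d: "dist (exp (\<i> * w)) 1 < \<eta>" by (simp add: dist_norm)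
    have n: "norm (exp (\<i> * w)) = exp (- Im w)" by (simp add: norm_exp_eq_Re)
    have "norm (exp (\<i> * w)) < 1" using w by (simp add: n inP)
    then have "exp (\<i> * w) \<in> A" using d \<eta> by (intro inA) auto
    then show ?thesis using d n by simp
  qed
  define F where "F = (\<lambda>w. - \<i> * Ln (T (exp (\<i> * w))))"
  have TP: "dist (T (exp (\<i> * w))) 1 < \<epsilon>0 \<and> norm (T (exp (\<i> * w))) < 1 \<and> T (exp (\<i> * w)) \<noteq> 0
      \<and> T (exp (\<i> * w)) \<notin> \<real>\<^sub>\<le>\<^sub>0 \<and> T (exp (\<i> * w)) \<in> cball 1 (1/2)" if w: "w \<in> P" for w
  proof -
    define \<zeta> where "\<zeta> = T (exp (\<i> * w))"
    have d: "dist \<zeta> 1 < \<epsilon>0" using Tnear expP[OF w] by (simp add: \<zeta>_def)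
    have n: "norm \<zeta> < 1" using nB TB expP[OF w] by (simp add: \<zeta>_def)
    have "\<bar>Re \<zeta> - 1\<bar> < 1/2" using abs_Re_le_cmod[of "\<zeta> - 1"] d \<epsilon>0 by (simp add: dist_norm)
    then have re: "0 < Re \<zeta>" by linarith
    then have "\<zeta> \<noteq> 0" "\<zeta> \<notin> \<real>\<^sub>\<le>\<^sub>0" by (auto simp: complex_nonpos_Reals_iff)
    moreover have "\<zeta> \<in> cball 1 (1/2)" using d \<epsilon>0 by (simp add: dist_commute)
    ultimately show ?thesis using d n by (simp add: \<zeta>_def)
  qed
  have holF: "F holomorphic_on P"
  proof -
    have h1: "(\<lambda>w. exp (\<i> * w)) holomorphic_on P" by (intro holomorphic_intros)
    have "(T \<circ> (\<lambda>w. exp (\<i> * w))) holomorphic_on P"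
      by (rule holomorphic_on_compose_gen[OF h1 holT]) (use expP in auto)
    then have h2: "(\<lambda>w. T (exp (\<i> * w))) holomorphic_on P" by (simp add: o_def)
    have h3: "(\<lambda>w. Ln (T (exp (\<i> * w)))) holomorphic_on P"
      by (rule holomorphic_on_Ln'[OF _ h2]) (use TP in auto)
    show ?thesis unfolding F_def by (intro holomorphic_intros h3)
  qed
  obtain M where M: "\<And>\<zeta>. \<zeta> \<in> cball 1 (1/2) \<Longrightarrow> norm (Ln \<zeta>) \<le> M"
  proof -
    have "cball (1::complex) (1/2) \<inter> \<real>\<^sub>\<le>\<^sub>0 = {}"
    proof (rule ccontr)
      assume "cball (1::complex) (1/2) \<inter> \<real>\<^sub>\<le>\<^sub>0 \<noteq> {}"
      then obtain \<zeta> :: complex where "\<zeta> \<in> cball 1 (1/2)" "\<zeta> \<in> \<real>\<^sub>\<le>\<^sub>0" by auto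
      then have "\<bar>Re \<zeta> - 1\<bar> \<le> 1/2" "Re \<zeta> \<le> 0"
        using abs_Re_le_cmod[of "\<zeta> - 1"] by (auto simp: dist_norm norm_minus_commute complex_nonpos_Reals_iff)
      then show False by linarith
    qed
    then have "continuous_on (cball (1::complex) (1/2)) Ln"
      by (intro holomorphic_on_imp_continuous_on holomorphic_on_Ln)
    then have "bounded (Ln ` cball (1::complex) (1/2))"
      by (intro compact_imp_bounded compact_continuous_image compact_cball)
    then obtain m where "\<forall>x\<in>cball 1 (1/2). norm (Ln x) \<le> m" by (auto simp: bounded_iff)
    then show ?thesis using that[of m] by blast
  qed
  have ImF: "Im (F w) = - ln (norm (T (exp (\<i> * w))))" if "w \<in> P" for w
    using TP[OF that] by (simp add: F_def)
  have bndF: "norm (F w) \<le> M" if "w \<in> P" for w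
    using M TP[OF that] by (simp add: F_def norm_mult)
  have limF: "\<exists>\<tau>>0. \<forall>w\<in>P. Im w < \<tau> \<longrightarrow> \<bar>Im (F w)\<bar> \<le> \<epsilon>" if \<epsilon>: "\<epsilon> > 0" for \<epsilon>
  proof -
    have "0 < 1 - exp (-\<epsilon>)" using \<epsilon> by simp
    from U[OF this] obtain \<theta> where \<theta>: "0 < \<theta>"
      "\<And>z. z \<in> A \<Longrightarrow> dist z 1 < \<eta> \<Longrightarrow> 1 - \<theta> < norm z \<Longrightarrow> 1 - (1 - exp (-\<epsilon>)) < norm (T z)" by blast
    define \<theta>' where "\<theta>' = min \<theta> (1/2)"
    have \<theta>': "0 < \<theta>'" "\<theta>' \<le> \<theta>" "\<theta>' \<le> 1/2" using \<theta> by (auto simp: \<theta>'_def)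
    define \<tau> where "\<tau> = - ln (1 - \<theta>')"
    have \<tau>: "0 < \<tau>" using \<theta>' by (simp add: \<tau>_def)
    have e\<tau>: "exp (-\<tau>) = 1 - \<theta>'" using \<theta>' by (simp add: \<tau>_def)
    show ?thesis
    proof (intro exI[of _ \<tau>] conjI \<tau> ballI impI)
      fix w assume w: "w \<in> P" "Im w < \<tau>"
      have "1 - \<theta> < norm (exp (\<i> * w))"
      proof -
        have "exp (-\<tau>) < exp (- Im w)" using w by simp
        then show ?thesis using expP[OF w(1)] e\<tau> \<theta>' by simp
      qed
      then have gt: "exp (-\<epsilon>) < norm (T (exp (\<i> * w)))" using \<theta>(2) expP[OF w(1)] by force
      have lt: "norm (T (exp (\<i> * w))) < 1" and pos: "0 < norm (T (exp (\<i> * w)))" using TP[OF w(1)] by auto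
      have "- \<epsilon> < ln (norm (T (exp (\<i> * w))))"
        using gt pos by (metis ln_exp ln_less_cancel_iff exp_gt_zero)
      moreover have "ln (norm (T (exp (\<i> * w)))) < 0" using lt pos by simp
      ultimately show "\<bar>Im (F w)\<bar> \<le> \<epsilon>" using ImF[OF w(1)] by simp
    qed
  qed
  obtain r0 \<Phi> where r0: "0 < r0" and hol\<Phi>0: "\<Phi> holomorphic_on ball 0 r0"
    and \<Phi>F: "\<And>w. w \<in> ball 0 r0 \<Longrightarrow> 0 < Im w \<Longrightarrow> \<Phi> w = F w"
  proof -
    obtain r H where "0 < r" "H holomorphic_on ball 0 r" "\<And>w. w \<in> ball 0 r \<Longrightarrow> 0 < Im w \<Longrightarrow> H w = F w"
      using reflection_box[OF a a holF[unfolded P_def] bndF[unfolded P_def] limF[unfolded P_def]] by metis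
    then show ?thesis by (rule that)
  qed
  define r1 where "r1 = min r0 a"
  have r1: "0 < r1" "r1 \<le> r0" "r1 \<le> a" using r0 a by (auto simp: r1_def)
  have hol\<Phi>: "\<Phi> holomorphic_on ball 0 r1" by (rule holomorphic_on_subset[OF hol\<Phi>0]) (use r1 in auto)
  have upP: "w \<in> P" if "w \<in> ball 0 r1" "0 < Im w" for w
    using that abs_Re_le_cmod[of w] abs_Im_le_cmod[of w] r1 by (auto simp: inP)
  have \<Phi>F1: "\<Phi> w = F w" if "w \<in> ball 0 r1" "0 < Im w" for w
    using \<Phi>F[of w] that r1 by auto
  have up: "0 < Im (\<Phi> w)" if "w \<in> ball 0 r1" "0 < Im w" for w
  proof -
    have wP: "w \<in> P" by (rule upP[OF that])
    have "norm (T (exp (\<i> * w))) < 1" "0 < norm (T (exp (\<i> * w)))" using TP[OF wP] by auto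
    then have "ln (norm (T (exp (\<i> * w)))) < 0" by simp
    then show ?thesis using \<Phi>F1[OF that] ImF[OF wP] by simp
  qed
  have cont\<Phi>: "isCont \<Phi> x" if "x \<in> ball 0 r1" for x
    using holomorphic_on_imp_continuous_on[OF hol\<Phi>] that by (simp add: continuous_on_eq_continuous_at)
  have real: "Im (\<Phi> x) = 0" if x: "x \<in> ball 0 r1" "Im x = 0" for x
  proof -
    have le: "\<bar>Im (\<Phi> x)\<bar> \<le> \<epsilon>" if \<epsilon>: "0 < \<epsilon>" for \<epsilon>
    proof -
      obtain \<tau> where \<tau>: "0 < \<tau>" "\<forall>w\<in>P. Im w < \<tau> \<longrightarrow> \<bar>Im (F w)\<bar> \<le> \<epsilon>" using limF[OF \<epsilon>] by blast
      have "((\<lambda>s::real. x + \<i> * of_real s) \<longlongrightarrow> x) (at_right 0)"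
        by (rule tendsto_eq_intros | simp)+
      from isCont_tendsto_compose[OF cont\<Phi>[OF x(1)] this]
      have "((\<lambda>s::real. \<bar>Im (\<Phi> (x + \<i> * of_real s))\<bar>) \<longlongrightarrow> \<bar>Im (\<Phi> x)\<bar>) (at_right 0)"
        by (intro tendsto_intros)
      moreover have "eventually (\<lambda>s::real. \<bar>Im (\<Phi> (x + \<i> * of_real s))\<bar> \<le> \<epsilon>) (at_right 0)"
      proof -
        have "0 < min \<tau> (r1 - norm x)" using \<tau> x by auto
        from eventually_at_right_0_lt[OF this] show ?thesis
        proof eventually_elim
          case (elim s)
          define w where "w = x + \<i> * of_real s"
          have "norm w \<le> norm x + norm (\<i> * of_real s)" unfolding w_def by (rule norm_triangle_ineq)
          then have "norm w < r1" using elim by (simp add: norm_mult)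
          then have wb: "w \<in> ball 0 r1" by simp
          have iw: "Im w = s" using x by (simp add: w_def)
          have "w \<in> P" using upP[OF wb] elim iw by simp
          then have "\<bar>Im (F w)\<bar> \<le> \<epsilon>" using \<tau>(2) iw elim by auto
          then show ?case using \<Phi>F1[OF wb] iw elim by (simp add: w_def)
        qed
      qed
      ultimately show ?thesis by (rule tendsto_upperbound) simp
    qed
    show ?thesis
    proof (rule ccontr)
      assume "Im (\<Phi> x) \<noteq> 0"
      then have "0 < \<bar>Im (\<Phi> x)\<bar> / 2" by simp
      from le[OF this] show False using \<open>Im (\<Phi> x) \<noteq> 0\<close> by simp
    qed
  qed
  have z0: "\<Phi> 0 = 0"
  proof -
    have "((\<lambda>s::real. \<i> * of_real s) \<longlongrightarrow> 0) (at_right 0)"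
      by (rule tendsto_eq_intros | simp)+
    from isCont_tendsto_compose[OF cont\<Phi> this]
    have lim1: "((\<lambda>s::real. \<Phi> (\<i> * of_real s)) \<longlongrightarrow> \<Phi> 0) (at_right 0)" using r1 by simp
    have evP: "eventually (\<lambda>s::real. \<i> * of_real s \<in> ball 0 r1 \<and> 0 < Im (\<i> * of_real s)) (at_right 0)"
      using eventually_at_right_0_lt[OF r1(1)] by eventually_elim (auto simp: norm_mult)
    have fl: "filterlim (\<lambda>s::real. exp (\<i> * (\<i> * of_real s))) (at 1 within A) (at_right 0)"
    proof (rule filterlim_at_withinI)
      show "((\<lambda>s::real. exp (\<i> * (\<i> * of_real s))) \<longlongrightarrow> 1) (at_right 0)"
        by (rule tendsto_eq_intros | simp)+
      show "eventually (\<lambda>s::real. exp (\<i> * (\<i> * of_real s)) \<in> A - {1}) (at_right 0)"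
        using evP
      proof eventually_elim
        case (elim s)
        then have "\<i> * of_real s \<in> P" using upP by blast
        from expP[OF this] have "exp (\<i> * (\<i> * of_real s)) \<in> A" by blast
        moreover have "exp (\<i> * (\<i> * of_real s)) \<noteq> 1"
        proof
          assume e1: "exp (\<i> * (\<i> * of_real s)) = 1"
          have "norm (exp (\<i> * (\<i> * of_real s))) < 1" using nA calculation by blast
          then show False unfolding e1 by simp
        qed
        ultimately show ?case by blast
      qed
    qed
    have "((\<lambda>s::real. T (exp (\<i> * (\<i> * of_real s)))) \<longlongrightarrow> 1) (at_right 0)"
      using filterlim_compose[OF limT fl] .
    then have "((\<lambda>s::real. F (\<i> * of_real s)) \<longlongrightarrow> - \<i> * Ln 1) (at_right 0)"
      unfolding F_def by (intro tendsto_intros) auto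
    then have "((\<lambda>s::real. F (\<i> * of_real s)) \<longlongrightarrow> 0) (at_right 0)" by simp
    moreover have "eventually (\<lambda>s::real. F (\<i> * of_real s) = \<Phi> (\<i> * of_real s)) (at_right 0)"
      using evP by eventually_elim (use \<Phi>F1 in auto)
    ultimately have lim2: "((\<lambda>s::real. \<Phi> (\<i> * of_real s)) \<longlongrightarrow> 0) (at_right 0)"
      by (rule Lim_transform_eventually)
    show ?thesis using tendsto_unique[OF _ lim1 lim2] by simp
  qed
  have dreal: "deriv \<Phi> 0 \<in> \<real>" and dpos: "0 < Re (deriv \<Phi> 0)"
    using phi_deriv_pos[OF hol\<Phi> r1(1) z0 real up] by auto
  have isLn: "isCont Ln (1::complex)" by (rule continuous_at_Ln) auto
  obtain d1 where d1: "0 < d1" "\<And>z. norm (z - 1) < d1 \<Longrightarrow> norm (Ln z - Ln 1) < r1"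
    using isCont_eps[where f=Ln and a=1 and e=r1] isLn r1 by blast
  define r3 where "r3 = min d1 (1/2)"
  have r3: "0 < r3" "r3 \<le> d1" "r3 \<le> 1/2" using d1 by (auto simp: r3_def)
  have ball1: "0 < Re z" "z \<notin> \<real>\<^sub>\<le>\<^sub>0" "z \<noteq> 0" "norm (Ln z) < r1" if "z \<in> ball 1 r3" for z
  proof -
    have "norm (z - 1) < r3" using that by (simp add: dist_norm norm_minus_commute)
    then have "\<bar>Re z - 1\<bar> < 1/2" using abs_Re_le_cmod[of "z - 1"] r3 by simp
    then show "0 < Re z" by linarith
    then show "z \<notin> \<real>\<^sub>\<le>\<^sub>0" "z \<noteq> 0" by (auto simp: complex_nonpos_Reals_iff)
    show "norm (Ln z) < r1" using d1(2)[of z] \<open>norm (z - 1) < r3\<close> r3 by simp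
  qed
  define S where "S = (\<lambda>z. exp (\<i> * \<Phi> (- \<i> * Ln z)))"
  have holS: "S holomorphic_on ball 1 r3"
  proof -
    have "ball (1::complex) r3 \<inter> \<real>\<^sub>\<le>\<^sub>0 = {}" using ball1(2) by auto
    then have hL: "(\<lambda>z. - \<i> * Ln z) holomorphic_on ball 1 r3" by (intro holomorphic_intros)
    have "(\<Phi> \<circ> (\<lambda>z. - \<i> * Ln z)) holomorphic_on ball 1 r3"
      by (rule holomorphic_on_compose_gen[OF hL hol\<Phi>]) (use ball1 in \<open>auto simp: norm_mult\<close>)
    then have "(\<lambda>z. \<Phi> (- \<i> * Ln z)) holomorphic_on ball 1 r3" by (simp add: o_def)
    then show ?thesis unfolding S_def by (intro holomorphic_intros)
  qed
  have agree: "S z = T z \<and> - \<i> * Ln z \<in> ball 0 r1 \<and> Im (- \<i> * Ln z) = - ln (norm z)" if z: "z \<in> A" "z \<in> ball 1 r3" for z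
  proof -
    define w where "w = - \<i> * Ln z"
    have zn: "z \<noteq> 0" using ball1[OF z(2)] by simp
    have wb: "w \<in> ball 0 r1" using ball1[OF z(2)] by (simp add: w_def norm_mult)
    have iw: "Im w = - ln (norm z)" using zn by (simp add: w_def)
    have "ln (norm z) < 0" using nA[OF z(1)] zn by simp
    then have iwp: "0 < Im w" using iw by simp
    have ez: "exp (\<i> * w) = z" using zn by (simp add: w_def)
    have wP: "w \<in> P" by (rule upP[OF wb iwp])
    have Tnz: "T z \<noteq> 0" using TP[OF wP] ez by simp
    have "S z = exp (\<i> * F w)" using \<Phi>F1[OF wb iwp] by (simp add: S_def w_def)
    also have "\<dots> = T z" using ez Tnz by (simp add: F_def)
    finally show ?thesis using wb iw by (simp add: w_def)
  qed
  have dS: "deriv S 1 = deriv \<Phi> 0"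
  proof -
    have l1: "(Ln has_field_derivative 1) (at (1::complex))"
      using has_field_derivative_Ln[of 1] by simp
    have l2: "((\<lambda>z. - \<i> * Ln z) has_field_derivative (- \<i> * 1)) (at (1::complex))"
      by (rule DERIV_cmult[OF l1])
    have p0: "0 \<in> ball (0::complex) r1" using r1 by simp
    have l3: "(\<Phi> has_field_derivative deriv \<Phi> 0) (at (- \<i> * Ln 1))"
      using holomorphic_derivI[OF hol\<Phi> open_ball p0] by simp
    have l4: "((\<lambda>z. \<Phi> (- \<i> * Ln z)) has_field_derivative deriv \<Phi> 0 * (- \<i> * 1)) (at (1::complex))"
      by (rule DERIV_chain2[OF l3 l2])
    have l5: "((\<lambda>z. \<i> * \<Phi> (- \<i> * Ln z)) has_field_derivative \<i> * (deriv \<Phi> 0 * (- \<i> * 1))) (at (1::complex))"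
      by (rule DERIV_cmult[OF l4])
    have l6: "(S has_field_derivative exp (\<i> * \<Phi> (- \<i> * Ln 1)) * (\<i> * (deriv \<Phi> 0 * (- \<i> * 1)))) (at (1::complex))"
      unfolding S_def by (rule DERIV_chain2[OF DERIV_exp l5])
    moreover have "exp (\<i> * \<Phi> (- \<i> * Ln 1)) * (\<i> * (deriv \<Phi> 0 * (- \<i> * 1))) = deriv \<Phi> 0"
    proof -
      have "\<i> * (deriv \<Phi> 0 * (- \<i> * 1)) = deriv \<Phi> 0"
        by (simp add: algebra_simps)
      then show ?thesis using z0 by simp
    qed
    ultimately have "(S has_field_derivative deriv \<Phi> 0) (at 1)" by simp
    then show ?thesis by (rule DERIV_imp_deriv)
  qed
  have P1: "\<forall>z\<in>A \<inter> ball 1 r3. S z = T z" using agree by blast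
  have P2: "deriv S 1 \<in> \<real>" using dS dreal by simp
  have P3: "0 < Re (deriv S 1)" using dS dpos by simp
  have P4: "\<forall>\<delta>>0. \<exists>\<epsilon>>0. \<forall>z\<in>A \<inter> ball 1 \<epsilon>.
                 norm z powr (Re (deriv S 1) + \<delta>) \<le> norm (T z) \<and>
                 norm (T z) \<le> norm z powr (Re (deriv S 1) - \<delta>)"
  proof (intro allI impI)
    fix \<delta> :: real assume \<delta>: "0 < \<delta>"
    obtain \<eta>2 where \<eta>2: "0 < \<eta>2" "\<eta>2 \<le> r1"
      "\<And>w. w \<in> ball 0 \<eta>2 \<Longrightarrow> \<bar>Im (\<Phi> w) - Re (deriv \<Phi> 0) * Im w\<bar> \<le> \<delta> * \<bar>Im w\<bar>"
      using phi_estimate[OF hol\<Phi> r1(1) real dreal \<delta>] by metis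
    obtain d2 where d2: "0 < d2" "\<And>z. norm (z - 1) < d2 \<Longrightarrow> norm (Ln z - Ln 1) < \<eta>2"
      using isCont_eps[where f=Ln and a=1 and e=\<eta>2] isLn \<eta>2 by blast
    define \<epsilon> where "\<epsilon> = min d2 r3"
    show "\<exists>\<epsilon>>0. \<forall>z\<in>A \<inter> ball 1 \<epsilon>. norm z powr (Re (deriv S 1) + \<delta>) \<le> norm (T z) \<and>
                 norm (T z) \<le> norm z powr (Re (deriv S 1) - \<delta>)"
    proof (intro exI[of _ \<epsilon>] conjI ballI)
      show "0 < \<epsilon>" using d2 r3 by (simp add: \<epsilon>_def)
      fix z assume zz: "z \<in> A \<inter> ball 1 \<epsilon>"
      have z: "z \<in> A" "z \<in> ball 1 r3" using zz by (auto simp: \<epsilon>_def)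
      define w where "w = - \<i> * Ln z"
      define c where "c = Re (deriv S 1)"
      define y where "y = Im w"
      have zn: "z \<noteq> 0" using ball1[OF z(2)] by simp
      have ag: "S z = T z" "Im w = - ln (norm z)" using agree[OF z] by (auto simp: w_def)
      have "ln (norm z) < 0" using nA[OF z(1)] zn by simp
      then have y: "0 < y" using ag by (simp add: y_def)
      have "norm (z - 1) < d2" using zz by (simp add: \<epsilon>_def dist_norm norm_minus_commute)
      then have "norm (Ln z) < \<eta>2" using d2 by simp
      then have wb: "w \<in> ball 0 \<eta>2" by (simp add: w_def norm_mult)
      have est: "\<bar>Im (\<Phi> w) - c * y\<bar> \<le> \<delta> * y"
        using \<eta>2(3)[OF wb] y dS by (simp add: c_def y_def)
      have nT: "norm (T z) = exp (- Im (\<Phi> w))"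
      proof -
        have "T z = exp (\<i> * \<Phi> w)" using ag(1) by (simp add: S_def w_def)
        then show ?thesis by (simp add: norm_exp_eq_Re)
      qed
      have pw: "norm z powr p = exp (- p * y)" for p
        using zn ag(2) by (simp add: powr_def y_def)
      have i1: "- (c + \<delta>) * y \<le> - Im (\<Phi> w)" using est by (simp add: abs_le_iff algebra_simps)
      have i2: "- Im (\<Phi> w) \<le> - (c - \<delta>) * y" using est by (simp add: abs_le_iff algebra_simps)
      show "norm z powr (Re (deriv S 1) + \<delta>) \<le> norm (T z)"
        unfolding pw nT c_def[symmetric] using i1 by simp
      show "norm (T z) \<le> norm z powr (Re (deriv S 1) - \<delta>)"
        unfolding pw nT c_def[symmetric] using i2 by simp
    qed
  qed
  show ?thesis
    apply (rule exI[of _ r3])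
    apply (rule conjI[OF r3(1)])
    apply (rule exI[of _ S])
    using holS P1 P2 P3 P4 by blast
qed

end
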